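(* A vertex $v$ of a $2$-connected cubic graph $G$ is not $\lambda$-matchable if and only if there exists a barrier $B$ of $G$ such that $v$ is an isolated vertex of $G-B$.
   Context: Graphs are loopless but may have parallel edges. For a vertex $v$ of a $2$-connected cubic graph $G$, a $v$-matching is a spanning subgraph in which $v$ has degree $3$ and every other vertex has degree $1$; $v$ is $\lambda$-matchable if $G$ has a $v$-matching. A barrier of a graph $G$ with a perfect matching is a set $S\subseteq V(G)$ such that the number of components of odd order of $G-S$ equals $|S|$. *)

theory Defs
  imports Main
begin

text \<open>Parallel edges are allowed since distinct edges may have equal ends.\<close>

definition multigraph :: "'v set \<Rightarrow> 'e set \<Rightarrow> ('e \<Rightarrow> 'v set) \<Rightarrow> bool" where
  "multigraph V E ends \<longleftrightarrow> finite V \<and> finite E \<and>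
     (\<forall>e\<in>E. ends e \<subseteq> V \<and> card (ends e) = 2)"

definition degree :: "'e set \<Rightarrow> ('e \<Rightarrow> 'v set) \<Rightarrow> 'v \<Rightarrow> nat" where
  "degree F ends x = card {e\<in>F. x \<in> ends e}"

definition cubic :: "'v set \<Rightarrow> 'e set \<Rightarrow> ('e \<Rightarrow> 'v set) \<Rightarrow> bool" where
  "cubic V E ends \<longleftrightarrow> multigraph V E ends \<and> (\<forall>x\<in>V. degree E ends x = 3)"

definition adj_in :: "'v set \<Rightarrow> 'e set \<Rightarrow> ('e \<Rightarrow> 'v set) \<Rightarrow> 'v \<Rightarrow> 'v \<Rightarrow> bool" where
  "adj_in W E ends x y \<longleftrightarrow> x \<in> W \<and> y \<in> W \<and> x \<noteq> y \<and> (\<exists>e\<in>E. ends e = {x, y})"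

definition reach_in :: "'v set \<Rightarrow> 'e set \<Rightarrow> ('e \<Rightarrow> 'v set) \<Rightarrow> 'v \<Rightarrow> 'v \<Rightarrow> bool" where
  "reach_in W E ends = (adj_in W E ends)\<^sup>*\<^sup>*"

definition connected_in :: "'v set \<Rightarrow> 'e set \<Rightarrow> ('e \<Rightarrow> 'v set) \<Rightarrow> bool" where
  "connected_in W E ends \<longleftrightarrow> W \<noteq> {} \<and> (\<forall>x\<in>W. \<forall>y\<in>W. reach_in W E ends x y)"

definition two_connected :: "'v set \<Rightarrow> 'e set \<Rightarrow> ('e \<Rightarrow> 'v set) \<Rightarrow> bool" where
  "two_connected V E ends \<longleftrightarrow> multigraph V E ends \<and> card V \<ge> 3 \<and>
     connected_in V E ends \<and> (\<forall>x\<in>V. connected_in (V - {x}) E ends)"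

definition components_in :: "'v set \<Rightarrow> 'e set \<Rightarrow> ('e \<Rightarrow> 'v set) \<Rightarrow> 'v set set" where
  "components_in W E ends = (\<lambda>x. {y\<in>W. reach_in W E ends x y}) ` W"

definition odd_components :: "'v set \<Rightarrow> 'e set \<Rightarrow> ('e \<Rightarrow> 'v set) \<Rightarrow> 'v set \<Rightarrow> nat" where
  "odd_components V E ends S = card {C \<in> components_in (V - S) E ends. odd (card C)}"

definition perfect_matching :: "'v set \<Rightarrow> 'e set \<Rightarrow> ('e \<Rightarrow> 'v set) \<Rightarrow> 'e set \<Rightarrow> bool" where
  "perfect_matching V E ends M \<longleftrightarrow> M \<subseteq> E \<and> (\<forall>x\<in>V. degree M ends x = 1)"

definition v_matching :: "'v set \<Rightarrow> 'e set \<Rightarrow> ('e \<Rightarrow> 'v set) \<Rightarrow> 'v \<Rightarrow> 'e set \<Rightarrow> bool" where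
  "v_matching V E ends v F \<longleftrightarrow> F \<subseteq> E \<and> degree F ends v = 3 \<and>
     (\<forall>x\<in>V - {v}. degree F ends x = 1)"

definition lambda_matchable :: "'v set \<Rightarrow> 'e set \<Rightarrow> ('e \<Rightarrow> 'v set) \<Rightarrow> 'v \<Rightarrow> bool" where
  "lambda_matchable V E ends v \<longleftrightarrow> (\<exists>F. v_matching V E ends v F)"

definition barrier :: "'v set \<Rightarrow> 'e set \<Rightarrow> ('e \<Rightarrow> 'v set) \<Rightarrow> 'v set \<Rightarrow> bool" where
  "barrier V E ends S \<longleftrightarrow> (\<exists>M. perfect_matching V E ends M) \<and> S \<subseteq> V \<and>
     odd_components V E ends S = card S"

definition isolated_in_minus :: "'v set \<Rightarrow> 'e set \<Rightarrow> ('e \<Rightarrow> 'v set) \<Rightarrow> 'v set \<Rightarrow> 'v \<Rightarrow> bool" where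
  "isolated_in_minus V E ends B v \<longleftrightarrow> v \<in> V - B \<and>
     (\<forall>e\<in>E. v \<in> ends e \<longrightarrow> ends e - {v} \<subseteq> B)"

end

theory Submission
  imports Defs
begin

definition rel_in :: "('v \<Rightarrow> 'v \<Rightarrow> bool) \<Rightarrow> 'v set \<Rightarrow> 'v \<Rightarrow> 'v \<Rightarrow> bool" where
  "rel_in A W x y \<longleftrightarrow> x \<in> W \<and> y \<in> W \<and> x \<noteq> y \<and> A x y"
definition comps :: "('v \<Rightarrow> 'v \<Rightarrow> bool) \<Rightarrow> 'v set \<Rightarrow> 'v set set" where
  "comps A W = (\<lambda>x. {y\<in>W. (rel_in A W)\<^sup>*\<^sup>* x y}) ` W"
definition oddc :: "('v \<Rightarrow> 'v \<Rightarrow> bool) \<Rightarrow> 'v set \<Rightarrow> nat" where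
  "oddc A W = card {C \<in> comps A W. odd (card C)}"
definition clos :: "('v \<Rightarrow> 'v \<Rightarrow> bool) \<Rightarrow> 'v set \<Rightarrow> 'v set \<Rightarrow> bool" where
  "clos A U C \<longleftrightarrow> (\<forall>x\<in>C. \<forall>y\<in>U. A x y \<longrightarrow> y \<in> C)"
definition conn :: "('v \<Rightarrow> 'v \<Rightarrow> bool) \<Rightarrow> 'v set \<Rightarrow> bool" where
  "conn A C \<longleftrightarrow> (\<forall>x\<in>C. \<forall>y\<in>C. (rel_in A C)\<^sup>*\<^sup>* x y)"

lemma rel_in_mono: "C \<subseteq> U \<Longrightarrow> (rel_in A C)\<^sup>*\<^sup>* x y \<Longrightarrow> (rel_in A U)\<^sup>*\<^sup>* x y"
proof -
  assume "C \<subseteq> U"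
  then have "rel_in A C \<le> rel_in A U" by (auto simp: rel_in_def)
  then show "(rel_in A C)\<^sup>*\<^sup>* x y \<Longrightarrow> (rel_in A U)\<^sup>*\<^sup>* x y"
    using rtranclp_mono by blast
qed

lemma clos_reach:
  assumes "clos A U C" "x \<in> C" "(rel_in A U)\<^sup>*\<^sup>* x y" shows "y \<in> C"
  using assms(3,2) 
proof (induction rule: rtranclp_induct)
  case base then show ?case by simp
next
  case (step y z) then show ?case using assms(1) by (auto simp: clos_def rel_in_def)
qed

lemma rel_in_sym:
  assumes "symp A" "(rel_in A U)\<^sup>*\<^sup>* x y" shows "(rel_in A U)\<^sup>*\<^sup>* y x"
  using assms(2)
proof (induction rule: rtranclp_induct)
  case base show ?case by simp
next
  case (step y z)
  have "rel_in A U z y" using step(2) assms(1) by (auto simp: rel_in_def symp_def)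
  then show ?case using step(3) by (meson converse_rtranclp_into_rtranclp)
qed

lemma comps_char:
  assumes s: "symp A"
  shows "C \<in> comps A U \<longleftrightarrow> C \<noteq> {} \<and> C \<subseteq> U \<and> clos A U C \<and> conn A C"
proof
  assume "C \<in> comps A U"
  then obtain x where x: "x \<in> U" and C: "C = {y\<in>U. (rel_in A U)\<^sup>*\<^sup>* x y}"
    by (auto simp: comps_def)
  have "x \<in> C" using x C by auto
  have cl: "clos A U C" unfolding clos_def C
  proof (intro ballI impI)
    fix a b assume a: "a \<in> {y\<in>U. (rel_in A U)\<^sup>*\<^sup>* x y}" and b: "b \<in> U" and ab: "A a b"
    show "b \<in> {y\<in>U. (rel_in A U)\<^sup>*\<^sup>* x y}"
    proof (cases "a = b")
      case True then show ?thesis using a by simp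
    next
      case False
      then have "rel_in A U a b" using a b ab by (auto simp: rel_in_def)
      then show ?thesis using a b by (auto intro: rtranclp.rtrancl_into_rtrancl)
    qed
  qed
  have r: "(rel_in A C)\<^sup>*\<^sup>* x y" if "(rel_in A U)\<^sup>*\<^sup>* x y" for y
    using that
  proof (induction rule: rtranclp_induct)
    case base then show ?case by simp
  next
    case (step y z)
    have "y \<in> C" "z \<in> C" using step x C
      by (auto simp: rel_in_def intro: rtranclp.rtrancl_into_rtrancl)
    then have "rel_in A C y z" using step(2) by (auto simp: rel_in_def)
    then show ?case using step(3) by (auto intro: rtranclp.rtrancl_into_rtrancl)
  qed
  have cn: "conn A C" unfolding conn_def
  proof (intro ballI)
    fix a b assume a: "a \<in> C" and b: "b \<in> C"
    have "(rel_in A C)\<^sup>*\<^sup>* x a" "(rel_in A C)\<^sup>*\<^sup>* x b" using a b C r by auto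
    then show "(rel_in A C)\<^sup>*\<^sup>* a b" using rel_in_sym[OF s, of C] by (meson rtranclp_trans)
  qed
  show "C \<noteq> {} \<and> C \<subseteq> U \<and> clos A U C \<and> conn A C"
    using \<open>x \<in> C\<close> C cl cn by auto
next
  assume h: "C \<noteq> {} \<and> C \<subseteq> U \<and> clos A U C \<and> conn A C"
  then obtain x where x: "x \<in> C" by auto
  have "C = {y\<in>U. (rel_in A U)\<^sup>*\<^sup>* x y}"
  proof
    show "C \<subseteq> {y\<in>U. (rel_in A U)\<^sup>*\<^sup>* x y}"
      using h x rel_in_mono[of C U A] by (auto simp: conn_def)
    show "{y\<in>U. (rel_in A U)\<^sup>*\<^sup>* x y} \<subseteq> C"
      using h x clos_reach[of A U C x] by auto
  qed
  then show "C \<in> comps A U" using x h unfolding comps_def by auto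
qed

lemma comps_eq:
  assumes s: "symp A" and a2: "C1 \<in> comps A U" and a3: "C2 \<in> comps A U"
    and a4: "x \<in> C1" and a5: "x \<in> C2"
  shows "C1 = C2"
proof -
  have h1: "C1 \<subseteq> U" "clos A U C1" "conn A C1" using a2 unfolding comps_char[OF s] by simp_all
  have h2: "C2 \<subseteq> U" "clos A U C2" "conn A C2" using a3 unfolding comps_char[OF s] by simp_all
  have "C1 \<subseteq> C2"
  proof
    fix y assume "y \<in> C1"
    then have "(rel_in A C1)\<^sup>*\<^sup>* x y" using h1(3) a4 by (simp add: conn_def)
    then have "(rel_in A U)\<^sup>*\<^sup>* x y" using rel_in_mono[OF h1(1)] by simp
    then show "y \<in> C2" using clos_reach[OF h2(2) a5] by simp
  qed
  moreover have "C2 \<subseteq> C1"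
  proof
    fix y assume "y \<in> C2"
    then have "(rel_in A C2)\<^sup>*\<^sup>* x y" using h2(3) a5 by (simp add: conn_def)
    then have "(rel_in A U)\<^sup>*\<^sup>* x y" using rel_in_mono[OF h2(1)] by simp
    then show "y \<in> C1" using clos_reach[OF h1(2) a4] by simp
  qed
  ultimately show ?thesis by blast
qed

lemma comps_disj: "symp A \<Longrightarrow> C1 \<in> comps A U \<Longrightarrow> C2 \<in> comps A U \<Longrightarrow> C1 \<noteq> C2 \<Longrightarrow> C1 \<inter> C2 = {}"
  using comps_eq[of A C1 U C2] by blast

lemma comp_of: "x \<in> U \<Longrightarrow> \<exists>C\<in>comps A U. x \<in> C"
  unfolding comps_def by auto

lemma comps_sub: "C \<in> comps A U \<Longrightarrow> C \<subseteq> U"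
  unfolding comps_def by auto

lemma Union_comps: "\<Union>(comps A U) = U"
  using comp_of[of _ U A] comps_sub[of _ A U] by blast

lemma finite_comps: "finite U \<Longrightarrow> finite (comps A U)"
  unfolding comps_def by auto

lemma sum_card_comps:
  assumes "symp A" "finite U" shows "(\<Sum>C\<in>comps A U. card C) = card U"
proof -
  have "card (\<Union>(comps A U)) = (\<Sum>C\<in>comps A U. card C)"
  proof (rule card_Union_disjoint)
    show "pairwise disjnt (comps A U)"
      unfolding pairwise_def disjnt_def using comps_disj[OF assms(1)] by blast
    show "finite C" if "C \<in> comps A U" for C
      using comps_sub[OF that] assms(2) finite_subset by blast
  qed
  then show ?thesis using Union_comps by metis
qed

lemma sum_parity:
  fixes f :: "'a \<Rightarrow> nat"
  shows "finite S \<Longrightarrow> even (sum f S) \<longleftrightarrow> even (card {a\<in>S. odd (f a)})"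
proof (induction S rule: finite_induct)
  case empty then show ?case by simp
next
  case (insert a S)
  show ?case
  proof (cases "odd (f a)")
    case True
    have e: "{b\<in>insert a S. odd (f b)} = insert a {b\<in>S. odd (f b)}" using True by auto
    have "a \<notin> {b\<in>S. odd (f b)}" using insert by auto
    moreover have "finite {b\<in>S. odd (f b)}" using insert by simp
    ultimately show ?thesis unfolding e using insert True by simp
  next
    case False
    have e: "{b\<in>insert a S. odd (f b)} = {b\<in>S. odd (f b)}" using False by auto
    show ?thesis unfolding e using insert False by simp
  qed
qed

lemma oddc_parity:
  assumes "symp A" "finite U" shows "even (oddc A U) \<longleftrightarrow> even (card U)"
proof -
  have "even (sum card (comps A U)) \<longleftrightarrow> even (card {C\<in>comps A U. odd (card C)})"
    by (rule sum_parity[OF finite_comps[OF assms(2)]])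
  then show ?thesis unfolding oddc_def sum_card_comps[OF assms] by (rule HOL.sym)
qed

lemma comps_split:
  assumes s: "symp A" and D: "D \<in> comps A U" and X: "X \<subseteq> D"
  shows "comps A (U - X) = (comps A U - {D}) \<union> comps A (D - X)"
proof (intro equalityI subsetI)
  have Dc: "D \<subseteq> U" "clos A U D" "conn A D" using D unfolding comps_char[OF s] by simp_all
  fix C assume C: "C \<in> comps A (U - X)"
  then have Cc: "C \<noteq> {}" "C \<subseteq> U - X" "clos A (U - X) C" "conn A C"
    unfolding comps_char[OF s] by simp_all
  obtain x where x: "x \<in> C" using Cc by auto
  show "C \<in> (comps A U - {D}) \<union> comps A (D - X)"
  proof (cases "x \<in> D")
    case True
    have "C \<subseteq> D"
    proof
      fix y assume "y \<in> C"
      then have "(rel_in A C)\<^sup>*\<^sup>* x y" using Cc(4) x by (simp add: conn_def)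
      then have "(rel_in A U)\<^sup>*\<^sup>* x y" using rel_in_mono[of C U] Cc(2) by blast
      then show "y \<in> D" using clos_reach[OF Dc(2) True] by simp
    qed
    then have "C \<subseteq> D - X" using Cc(2) by blast
    moreover have "clos A (D - X) C" using Cc(3) \<open>C \<subseteq> D\<close> Dc(1) unfolding clos_def by blast
    ultimately have "C \<in> comps A (D - X)" using Cc(1,4) comps_char[OF s, of C "D - X"] by blast
    then show ?thesis by simp
  next
    case False
    have "x \<in> U" using Cc x by blast
    then obtain C' where C': "C' \<in> comps A U" "x \<in> C'" using comp_of[of x U A] by blast
    have C'c: "C' \<noteq> {}" "C' \<subseteq> U" "clos A U C'" "conn A C'"
      using C'(1) unfolding comps_char[OF s] by simp_all
    have "C' \<noteq> D" using C' False by auto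
    then have dj: "C' \<inter> D = {}" using comps_disj[OF s C'(1) D] by simp
    have "C' \<subseteq> U - X" using C'c(2) dj X by blast
    moreover have "clos A (U - X) C'" using C'c(3) unfolding clos_def by blast
    ultimately have "C' \<in> comps A (U - X)" using C'c(1,4) comps_char[OF s, of C' "U - X"] by blast
    then have "C = C'" using comps_eq[OF s C _ x C'(2)] by simp
    then show ?thesis using C' \<open>C' \<noteq> D\<close> by simp
  qed
next
  have Dc: "D \<subseteq> U" "clos A U D" "conn A D" using D unfolding comps_char[OF s] by simp_all
  fix C assume "C \<in> (comps A U - {D}) \<union> comps A (D - X)"
  then consider (a) "C \<in> comps A U" "C \<noteq> D" | (b) "C \<in> comps A (D - X)" by blast
  then show "C \<in> comps A (U - X)"
  proof cases
    case a
    then have dj: "C \<inter> D = {}" using comps_disj[OF s _ D] by simp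
    have Cc: "C \<noteq> {}" "C \<subseteq> U" "clos A U C" "conn A C"
      using a(1) unfolding comps_char[OF s] by simp_all
    have "C \<subseteq> U - X" using Cc(2) dj X by blast
    moreover have "clos A (U - X) C" using Cc(3) unfolding clos_def by blast
    ultimately show ?thesis using Cc(1,4) comps_char[OF s, of C "U - X"] by blast
  next
    case b
    then have Cc: "C \<noteq> {}" "C \<subseteq> D - X" "clos A (D - X) C" "conn A C"
      unfolding comps_char[OF s] by simp_all
    have "clos A (U - X) C" unfolding clos_def
    proof (intro ballI impI)
      fix a b assume ab: "a \<in> C" "b \<in> U - X" "A a b"
      then have "b \<in> D" using Dc(2) Cc(2) unfolding clos_def by blast
      then show "b \<in> C" using Cc(3) ab unfolding clos_def by blast
    qed
    moreover have "C \<subseteq> U - X" using Cc(2) Dc(1) by blast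
    ultimately show ?thesis using Cc(1,4) comps_char[OF s, of C "U - X"] by blast
  qed
qed

lemma oddc_split:
  assumes s: "symp A" and f: "finite U" and D: "D \<in> comps A U" and X: "X \<subseteq> D"
  shows "oddc A (U - X) + (if odd (card D) then 1 else 0) = oddc A U + oddc A (D - X)"
proof -
  let ?O = "\<lambda>W. {C \<in> comps A W. odd (card C)}"
  have e: "?O (U - X) = (?O U - {D}) \<union> ?O (D - X)"
    using comps_split[OF s D X] by auto
  have DU: "D \<subseteq> U" using D comps_sub by auto
  have dj: "(?O U - {D}) \<inter> ?O (D - X) = {}"
  proof -
    { fix C assume C1: "C \<in> comps A U" "C \<noteq> D" and C2: "C \<in> comps A (D - X)"
      have "C \<inter> D = {}" using comps_disj[OF s C1(1) D C1(2)] .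
      moreover have "C \<noteq> {}" "C \<subseteq> D - X" using C2 unfolding comps_char[OF s] by simp_all
      ultimately have False by auto }
    then show ?thesis by auto
  qed
  have fO: "finite (?O W)" if "finite W" for W using finite_comps[OF that] by auto
  have fD: "finite (D - X)" using f DU finite_subset by blast
  have "oddc A (U - X) = card (?O U - {D}) + card (?O (D - X))"
    unfolding oddc_def e by (rule card_Un_disjoint[OF _ _ dj]) (use fO[OF f] fO[OF fD] in blast)+
  moreover have "card (?O U - {D}) + (if odd (card D) then 1 else 0) = card (?O U)"
  proof (cases "odd (card D)")
    case True
    then have "D \<in> ?O U" using D by simp
    then show ?thesis using True fO[OF f] by (simp add: card_Suc_Diff1 del: card_Diff_insert)
  next
    case False then show ?thesis by simp
  qed
  ultimately show ?thesis unfolding oddc_def by simp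
qed

definition pm :: "('v \<Rightarrow> 'v \<Rightarrow> bool) \<Rightarrow> 'v set \<Rightarrow> ('v \<Rightarrow> 'v) \<Rightarrow> bool" where
  "pm A W m \<longleftrightarrow> (\<forall>x\<in>W. m x \<in> W \<and> m x \<noteq> x \<and> A x (m x) \<and> m (m x) = x)"

definition tcond :: "('v \<Rightarrow> 'v \<Rightarrow> bool) \<Rightarrow> 'v set \<Rightarrow> bool" where
  "tcond A W \<longleftrightarrow> (\<forall>S\<subseteq>W. oddc A (W - S) \<le> card S)"

lemma pm_ext:
  assumes "pm A P m" "a \<notin> P" "b \<notin> P" "a \<noteq> b" "A a b" "A b a"
  shows "pm A (insert a (insert b P)) (m(a:=b, b:=a))"
  using assms unfolding pm_def by auto

lemma pm_Un:
  assumes "pm A P m1" "pm A Q m2" "P \<inter> Q = {}"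
  shows "pm A (P \<union> Q) (\<lambda>x. if x \<in> P then m1 x else m2 x)"
  using assms unfolding pm_def by (auto simp: disjoint_iff)

lemma pm_Union:
  assumes "finite F" "\<forall>P\<in>F. \<forall>Q\<in>F. P \<noteq> Q \<longrightarrow> P \<inter> Q = {}" "\<forall>P\<in>F. \<exists>m. pm A P m"
  shows "\<exists>m. pm A (\<Union>F) m"
  using assms
proof (induction F rule: finite_induct)
  case empty then show ?case by (auto simp: pm_def)
next
  case (insert P F)
  then obtain m1 where m1: "pm A P m1" by auto
  from insert obtain m2 where m2: "pm A (\<Union>F) m2" by auto
  have "P \<inter> \<Union>F = {}" using insert by auto
  then show ?case using pm_Un[OF m1 m2] by auto
qed

lemma hall:
  fixes N :: "'i \<Rightarrow> 'a set"
  assumes "finite I" "\<forall>i\<in>I. finite (N i)" "\<forall>J\<subseteq>I. card J \<le> card (\<Union>(N ` J))"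
  shows "\<exists>f. inj_on f I \<and> (\<forall>i\<in>I. f i \<in> N i)"
  using assms
proof (induction "card I" arbitrary: I N rule: less_induct)
  case less
  note finI = less(2) and finN = less(3) and hc = less(4)
  show ?case
  proof (cases "I = {}")
    case True then show ?thesis by auto
  next
    case False
    show ?thesis
    proof (cases "\<exists>J. J \<subseteq> I \<and> J \<noteq> {} \<and> J \<noteq> I \<and> card (\<Union>(N ` J)) = card J")
      case True
      then obtain J where J: "J \<subseteq> I" "J \<noteq> {}" "J \<noteq> I" "card (\<Union>(N ` J)) = card J" by blast
      have "finite J" using J finI finite_subset by blast
      have "card J < card I" using J finI by (meson psubsetI psubset_card_mono)
      moreover note \<open>finite J\<close>
      moreover have "\<forall>i\<in>J. finite (N i)" using J finN by blast
      moreover have "\<forall>K\<subseteq>J. card K \<le> card (\<Union>(N ` K))" using J hc by blast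
      ultimately obtain f1 where f1: "inj_on f1 J" "\<forall>i\<in>J. f1 i \<in> N i"
        using less(1) by blast
      define NJ where "NJ = \<Union>(N ` J)"
      have finNJ: "finite NJ" unfolding NJ_def using \<open>finite J\<close> \<open>\<forall>i\<in>J. finite (N i)\<close> by auto
      define N2 where "N2 = (\<lambda>i. N i - NJ)"
      have "card (I - J) = card I - card J" using J finI \<open>finite J\<close> by (simp add: card_Diff_subset)
      moreover have "card J > 0" using J \<open>finite J\<close> by (simp add: card_gt_0_iff)
      moreover have "card J \<le> card I" using J finI by (simp add: card_mono)
      ultimately have "card (I - J) < card I" by linarith
      moreover have "finite (I - J)" using finI by blast
      moreover have "\<forall>i\<in>I - J. finite (N2 i)" using finN unfolding N2_def by blast
      moreover have "\<forall>K\<subseteq>I - J. card K \<le> card (\<Union>(N2 ` K))"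
      proof (intro allI impI)
        fix K assume K: "K \<subseteq> I - J"
        have fK: "finite K" using K finI finite_subset by blast
        have e: "\<Union>(N2 ` K) = \<Union>(N ` (K \<union> J)) - NJ" unfolding N2_def NJ_def by auto
        have fKJ: "finite (\<Union>(N ` (K \<union> J)))" using K J finN fK \<open>finite J\<close> by auto
        have sub: "NJ \<subseteq> \<Union>(N ` (K \<union> J))" unfolding NJ_def by auto
        have "card (K \<union> J) \<le> card (\<Union>(N ` (K \<union> J)))" using hc[rule_format, of "K \<union> J"] K J by auto
        moreover have "card (K \<union> J) = card K + card J" using K fK \<open>finite J\<close> by (subst card_Un_disjoint) auto
        moreover have "card (\<Union>(N2 ` K)) = card (\<Union>(N ` (K \<union> J))) - card NJ"
          unfolding e using card_Diff_subset[OF finNJ sub] .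
        ultimately show "card K \<le> card (\<Union>(N2 ` K))" using J(4) unfolding NJ_def by linarith
      qed
      ultimately obtain f2 where f2: "inj_on f2 (I - J)" "\<forall>i\<in>I - J. f2 i \<in> N2 i"
        using less(1) by blast
      define f where "f = (\<lambda>i. if i \<in> J then f1 i else f2 i)"
      have "inj_on f I"
      proof (rule inj_onI)
        fix i j assume ij: "i \<in> I" "j \<in> I" "f i = f j"
        show "i = j"
        proof (cases "i \<in> J"; cases "j \<in> J")
          assume "i \<in> J" "j \<in> J" then show ?thesis using ij f1 unfolding f_def inj_on_def by auto
        next
          assume a1: "i \<in> J" "j \<notin> J"
          have "f i \<in> NJ" using f1 a1 unfolding f_def NJ_def by auto
          moreover have "f j \<notin> NJ" using f2 a1 ij(2) unfolding f_def N2_def by auto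
          ultimately show ?thesis using ij by auto
        next
          assume a1: "i \<notin> J" "j \<in> J"
          have "f j \<in> NJ" using f1 a1 unfolding f_def NJ_def by auto
          moreover have "f i \<notin> NJ" using f2 a1 ij(1) unfolding f_def N2_def by auto
          ultimately show ?thesis using ij by auto
        next
          assume "i \<notin> J" "j \<notin> J" then show ?thesis using ij f2 unfolding f_def inj_on_def by auto
        qed
      qed
      moreover have "\<forall>i\<in>I. f i \<in> N i" using f1 f2 unfolding f_def N2_def by auto
      ultimately show ?thesis by blast
    next
      case False2: False
      obtain i0 where i0: "i0 \<in> I" using False by blast
      have "card {i0} \<le> card (\<Union>(N ` {i0}))" using hc[rule_format, of "{i0}"] i0 by blast
      then have "N i0 \<noteq> {}" by auto
      then obtain a where a: "a \<in> N i0" by blast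
      define I1 where "I1 = I - {i0}"
      define N1 where "N1 = (\<lambda>i. N i - {a})"
      have "card I1 < card I" unfolding I1_def using i0 finI by (meson card_Diff1_less)
      moreover have "finite I1" unfolding I1_def using finI by blast
      moreover have "\<forall>i\<in>I1. finite (N1 i)" using finN unfolding N1_def I1_def by blast
      moreover have "\<forall>K\<subseteq>I1. card K \<le> card (\<Union>(N1 ` K))"
      proof (intro allI impI)
        fix K assume K: "K \<subseteq> I1"
        show "card K \<le> card (\<Union>(N1 ` K))"
        proof (cases "K = {}")
          case True then show ?thesis by simp
        next
          case False
          have KI: "K \<subseteq> I" "K \<noteq> I" using K i0 unfolding I1_def by auto
          have fK: "finite K" using K finI finite_subset KI by blast
          have fU: "finite (\<Union>(N ` K))" using fK finN KI by auto
          have "card K \<le> card (\<Union>(N ` K))" using hc[rule_format, of K] KI by blast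
          moreover have "card (\<Union>(N ` K)) \<noteq> card K" using False2 KI False by blast
          ultimately have "card K + 1 \<le> card (\<Union>(N ` K))" by linarith
          moreover have "\<Union>(N1 ` K) = \<Union>(N ` K) - {a}" unfolding N1_def by auto
          moreover have "card (\<Union>(N ` K) - {a}) \<ge> card (\<Union>(N ` K)) - 1"
            using fU by (metis card_Diff1_le card_Diff_singleton_if diff_le_self order_refl)
          ultimately show ?thesis by simp
        qed
      qed
      ultimately obtain f1 where f1: "inj_on f1 I1" "\<forall>i\<in>I1. f1 i \<in> N1 i"
        using less(1) by blast
      define f where "f = f1(i0 := a)"
      have "inj_on f I"
      proof (rule inj_onI)
        fix i j assume ij: "i \<in> I" "j \<in> I" "f i = f j"
        show "i = j"
        proof (cases "i = i0"; cases "j = i0")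
          assume "i \<noteq> i0" "j \<noteq> i0" then show ?thesis using ij f1 unfolding f_def inj_on_def I1_def by auto
        next
          assume "i = i0" "j \<noteq> i0" 
          then have "f j \<noteq> a" using f1 ij unfolding f_def N1_def I1_def by auto
          then show ?thesis using ij \<open>i = i0\<close> unfolding f_def by auto
        next
          assume "i \<noteq> i0" "j = i0" 
          then have "f i \<noteq> a" using f1 ij unfolding f_def N1_def I1_def by auto
          then show ?thesis using ij \<open>j = i0\<close> unfolding f_def by auto
        qed simp
      qed
      moreover have "\<forall>i\<in>I. f i \<in> N i" using f1 a unfolding f_def N1_def I1_def by auto
      ultimately show ?thesis by blast
    qed
  qed
qed

lemma comp_odd_card:
  assumes s: "symp A" and "finite U" "C \<in> comps A U" shows "finite C"
  using finite_subset[OF comps_sub[OF assms(3)] assms(2)] .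

theorem tutte:
  assumes s: "symp A" and "finite W" and "tcond A W"
  shows "\<exists>m. pm A W m"
  using assms(2,3)
proof (induction "card W" arbitrary: W rule: less_induct)
  case less
  note fin = less(2) and tc = less(3)
  have tc': "oddc A (W - T) \<le> card T" if "T \<subseteq> W" for T
    using tc that unfolding tcond_def by blast
  define Bs where "Bs = {S. S \<subseteq> W \<and> oddc A (W - S) = card S}"
  have "oddc A W \<le> 0" using tc'[of "{}"] by simp
  then have o0: "oddc A W = 0" by simp
  have evW: "even (card W)" using oddc_parity[OF s fin] o0 by simp
  have par: "even (oddc A (W - T)) \<longleftrightarrow> even (card T)" if "T \<subseteq> W" for T
  proof -
    have "card (W - T) = card W - card T" using that fin by (simp add: card_Diff_subset finite_subset)
    moreover have "card T \<le> card W" using that fin by (simp add: card_mono)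
    moreover have "even (oddc A (W - T)) \<longleftrightarrow> even (card (W - T))" using oddc_parity[OF s] fin by simp
    ultimately show ?thesis using evW by auto
  qed
  have "{} \<in> Bs" unfolding Bs_def using o0 by simp
  have finBs: "finite Bs" unfolding Bs_def using fin by simp
  define k where "k = Max (card ` Bs)"
  have "k \<in> card ` Bs" unfolding k_def using finBs \<open>{} \<in> Bs\<close> by (intro Max_in) auto
  then obtain S where S: "S \<in> Bs" "card S = k" by auto
  have Smax: "card T \<le> card S" if "T \<in> Bs" for T
    using S(2) that finBs unfolding k_def by simp
  have SW: "S \<subseteq> W" and oS: "oddc A (W - S) = card S" using S(1) unfolding Bs_def by auto
  define U where "U = W - S"
  have finU: "finite U" unfolding U_def using fin by simp
  have finS: "finite S" using finite_subset[OF SW fin] .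
  have finC: "finite C" if "C \<in> comps A U" for C using comp_odd_card[OF s finU that] .
  have CU: "C \<subseteq> U" if "C \<in> comps A U" for C using comps_sub[OF that] .
  have allodd: "odd (card D)" if D: "D \<in> comps A U" for D
  proof (rule ccontr)
    assume ev: "\<not> odd (card D)"
    have "D \<noteq> {}" using D unfolding comps_char[OF s] by simp
    then obtain x where x: "x \<in> D" by blast
    have fD: "finite D" using finC[OF D] .
    have sp: "oddc A (U - {x}) + (if odd (card D) then 1 else 0) = oddc A U + oddc A (D - {x})"
      using oddc_split[OF s finU D] x by simp
    have "card (D - {x}) = card D - 1" using x fD by simp
    moreover have "card D \<ge> 1" using x fD by (auto simp: card_gt_0_iff Suc_le_eq) 
    ultimately have "odd (card (D - {x}))" using ev by (simp add: odd_pos)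
    then have "odd (oddc A (D - {x}))" using oddc_parity[OF s, of "D - {x}"] fD by simp
    then have o1: "oddc A (D - {x}) \<ge> 1" by (simp add: odd_pos Suc_le_eq)
    define T where "T = insert x S"
    have xU: "x \<in> U" using x CU[OF D] by blast
    have TW: "T \<subseteq> W" unfolding T_def using xU SW U_def by blast
    have xS: "x \<notin> S" using xU unfolding U_def by blast
    have cT: "card T = card S + 1" unfolding T_def using xS finS by simp
    have WT: "W - T = U - {x}" unfolding T_def U_def by blast
    have "oddc A (W - T) \<ge> card T" using sp ev o1 oS cT WT unfolding U_def by simp
    moreover have "oddc A (W - T) \<le> card T" using tc'[OF TW] .
    ultimately have "T \<in> Bs" unfolding Bs_def using TW by simp
    then show False using Smax cT by fastforce
  qed
  have fc: "\<exists>m. pm A (C - {x}) m" if C: "C \<in> comps A U" and x: "x \<in> C" for C x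
  proof -
    have fC: "finite C" using finC[OF C] .
    have CW: "C \<subseteq> W" using CU[OF C] unfolding U_def by blast
    have "card (C - {x}) < card W"
      using card_Diff1_less[OF fC x] card_mono[OF fin CW] by linarith
    moreover have "finite (C - {x})" using fC by simp
    moreover have "tcond A (C - {x})" unfolding tcond_def
    proof (intro allI impI)
      fix T assume T: "T \<subseteq> C - {x}"
      show "oddc A (C - {x} - T) \<le> card T"
      proof (rule ccontr)
        assume "\<not> ?thesis"
        then have gt: "oddc A (C - {x} - T) > card T" by simp
        have fT: "finite T" by (rule finite_subset[OF _ fC]) (use T in blast)
        have cCx: "card (C - {x}) = card C - 1" using x fC by simp
        have "card C \<ge> 1" using x fC by (auto simp: card_gt_0_iff Suc_le_eq)
        then have evCx: "even (card (C - {x}))" using allodd[OF C] cCx by simp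
        have cT': "card (C - {x} - T) = card (C - {x}) - card T"
          using T fC by (simp add: card_Diff_subset finite_subset)
        have "card T \<le> card (C - {x})" using T fC by (simp add: card_mono)
        then have "even (card (C - {x} - T)) \<longleftrightarrow> even (card T)" using evCx cT' by auto
        then have "even (oddc A (C - {x} - T)) \<longleftrightarrow> even (card T)"
          using oddc_parity[OF s, of "C - {x} - T"] fC by simp
        then have "oddc A (C - {x} - T) \<noteq> card T + 1" by auto
        then have ge2: "oddc A (C - {x} - T) \<ge> card T + 2" using gt by linarith
        define X where "X = insert x T"
        have XC: "X \<subseteq> C" unfolding X_def using T x by blast
        have sp: "oddc A (U - X) + (if odd (card C) then 1 else 0) = oddc A U + oddc A (C - X)"
          using oddc_split[OF s finU C XC] .
        have CX: "C - X = C - {x} - T" unfolding X_def by blast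
        define T' where "T' = S \<union> X"
        have T'W: "T' \<subseteq> W" unfolding T'_def using SW XC CW by blast
        have SX: "S \<inter> X = {}" using XC CU[OF C] unfolding U_def by blast
        have xT: "x \<notin> T" using T by blast
        have cX: "card X = card T + 1" unfolding X_def using xT fT by simp
        have cT'': "card T' = card S + card T + 1" unfolding T'_def
        proof -
          have "finite X" by (rule finite_subset[OF XC fC])
          then show "card (S \<union> X) = card S + card T + 1" using card_Un_disjoint[OF finS _ SX] cX by simp
        qed
        have WT': "W - T' = U - X" unfolding T'_def U_def by blast
        have "oddc A (W - T') \<ge> card T'"
          using sp allodd[OF C] ge2 CX oS WT' cT'' unfolding U_def by simp
        moreover have "oddc A (W - T') \<le> card T'" using tc'[OF T'W] .
        ultimately have "T' \<in> Bs" unfolding Bs_def using T'W by simp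
        then show False using Smax cT'' by fastforce
      qed
    qed
    ultimately show ?thesis using less(1) by blast
  qed
  define I where "I = comps A U"
  define N where "N = (\<lambda>C. {s\<in>S. \<exists>y\<in>C. A y s})"
  have finI: "finite I" unfolding I_def using finite_comps[OF finU] .
  have hallc: "\<forall>J\<subseteq>I. card J \<le> card (\<Union>(N ` J))"
  proof (intro allI impI)
    fix J assume J: "J \<subseteq> I"
    show "card J \<le> card (\<Union>(N ` J))"
    proof (rule ccontr)
      assume "\<not> ?thesis"
      then have lt: "card (\<Union>(N ` J)) < card J" by simp
      define T where "T = \<Union>(N ` J)"
      have TS: "T \<subseteq> S" unfolding T_def N_def by blast
      then have TW: "T \<subseteq> W" using SW by blast
      have Jsub: "J \<subseteq> {C\<in>comps A (W - T). odd (card C)}"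
      proof
        fix C assume CJ: "C \<in> J"
        then have C: "C \<in> comps A U" using J unfolding I_def by blast
        have Cc: "C \<noteq> {}" "C \<subseteq> U" "clos A U C" "conn A C"
          using C unfolding comps_char[OF s] by simp_all
        have "C \<subseteq> W - T" using Cc(2) TS unfolding U_def by blast
        moreover have "clos A (W - T) C" unfolding clos_def
        proof (intro ballI impI)
          fix a b assume ab: "a \<in> C" "b \<in> W - T" "A a b"
          show "b \<in> C"
          proof (cases "b \<in> S")
            case True
            then have "b \<in> N C" unfolding N_def using ab by blast
            then have "b \<in> T" unfolding T_def using CJ by blast
            then show ?thesis using ab by blast
          next
            case False
            then have "b \<in> U" using ab unfolding U_def by blast
            then show ?thesis using Cc(3) ab unfolding clos_def by blast
          qed
        qed
        ultimately have "C \<in> comps A (W - T)" using Cc(1,4) comps_char[OF s, of C "W - T"] by blast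
        then show "C \<in> {C\<in>comps A (W - T). odd (card C)}" using allodd[OF C] by simp
      qed
      have "card J \<le> oddc A (W - T)" unfolding oddc_def
        by (rule card_mono[OF _ Jsub]) (use finite_comps[of "W - T" A] fin in simp)
      also have "\<dots> \<le> card T" using tc'[OF TW] .
      finally show False using lt unfolding T_def by simp
    qed
  qed
  have finN: "\<forall>C\<in>I. finite (N C)" unfolding N_def using finS by simp
  obtain f where f: "inj_on f I" "\<forall>C\<in>I. f C \<in> N C" using hall[OF finI finN hallc] by blast
  have cI: "card I = card S"
  proof -
    have "{C \<in> comps A U. odd (card C)} = comps A U" using allodd by blast
    then show ?thesis using oS unfolding oddc_def I_def U_def by simp
  qed
  have fI: "f ` I = S"
  proof (rule card_subset_eq[OF finS])
    show "f ` I \<subseteq> S" using f(2) unfolding N_def by blast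
    show "card (f ` I) = card S" using card_image[OF f(1)] cI by simp
  qed
  define P where "P = (\<lambda>C. insert (f C) C) ` I"
  have pieces: "\<forall>Q\<in>P. \<exists>m. pm A Q m"
  proof
    fix Q assume "Q \<in> P"
    then obtain C where C: "C \<in> I" and Q: "Q = insert (f C) C" unfolding P_def by blast
    have "f C \<in> N C" using f(2) C by blast
    then obtain y where y: "y \<in> C" "A y (f C)" and fS: "f C \<in> S" unfolding N_def by blast
    obtain m0 where m0: "pm A (C - {y}) m0" using fc[of C y] C y unfolding I_def by blast
    have fC: "f C \<notin> C" using fS CU[of C] C unfolding I_def U_def by blast
    have "pm A (insert y (insert (f C) (C - {y}))) (m0(y := f C, f C := y))"
      by (rule pm_ext[OF m0]) (use y fC s in \<open>auto simp: symp_def\<close>)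
    moreover have "insert y (insert (f C) (C - {y})) = Q" unfolding Q using y by blast
    ultimately show "\<exists>m. pm A Q m" by auto
  qed
  have disj: "\<forall>Q1\<in>P. \<forall>Q2\<in>P. Q1 \<noteq> Q2 \<longrightarrow> Q1 \<inter> Q2 = {}"
  proof (intro ballI impI)
    fix Q1 Q2 assume Q1: "Q1 \<in> P" and Q2: "Q2 \<in> P" and ne: "Q1 \<noteq> Q2"
    obtain C1 where C1: "C1 \<in> I" "Q1 = insert (f C1) C1" using Q1 unfolding P_def by blast
    obtain C2 where C2: "C2 \<in> I" "Q2 = insert (f C2) C2" using Q2 unfolding P_def by blast
    have "C1 \<noteq> C2" using ne C1 C2 by blast
    then have d: "C1 \<inter> C2 = {}" using comps_disj[OF s] C1 C2 unfolding I_def by blast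
    have "f C1 \<noteq> f C2" using f(1) C1 C2 \<open>C1 \<noteq> C2\<close> unfolding inj_on_def by blast
    moreover have "f C1 \<in> S" "f C2 \<in> S" using fI C1 C2 by blast+
    moreover have "C1 \<subseteq> U" "C2 \<subseteq> U" using CU C1 C2 unfolding I_def by blast+
    ultimately show "Q1 \<inter> Q2 = {}" using d C1 C2 unfolding U_def by blast
  qed
  have finP: "finite P" unfolding P_def using finI by simp
  have "\<Union>P = W"
  proof -
    have "\<Union>P = f ` I \<union> \<Union>I" unfolding P_def by blast
    also have "\<dots> = S \<union> U" using fI Union_comps[of A U] unfolding I_def by simp
    also have "\<dots> = W" using SW unfolding U_def by blast
    finally show ?thesis .
  qed
  then show ?case using pm_Union[OF finP disj pieces] by simp
qed

definition gadj :: "'e set \<Rightarrow> ('e \<Rightarrow> 'v set) \<Rightarrow> 'v \<Rightarrow> 'v \<Rightarrow> bool" where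
  "gadj E ends x y \<longleftrightarrow> (\<exists>e\<in>E. ends e = {x, y})"

lemma gadj_sym: "symp (gadj E ends)"
  unfolding symp_def gadj_def by (metis insert_commute)

lemma adj_in_eq: "adj_in W E ends = rel_in (gadj E ends) W"
  by (auto simp: fun_eq_iff adj_in_def rel_in_def gadj_def)

lemma components_eq: "components_in W E ends = comps (gadj E ends) W"
  unfolding components_in_def comps_def reach_in_def adj_in_eq ..

lemma odd_comp_eq: "odd_components V E ends S = oddc (gadj E ends) (V - S)"
  unfolding odd_components_def oddc_def components_eq ..

lemma connected_eq:
  "connected_in W E ends \<longleftrightarrow> W \<noteq> {} \<and> (\<forall>x\<in>W. \<forall>y\<in>W. (rel_in (gadj E ends) W)\<^sup>*\<^sup>* x y)"
  unfolding connected_in_def reach_in_def adj_in_eq ..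

definition lv :: "'e set \<Rightarrow> ('e \<Rightarrow> 'v set) \<Rightarrow> 'v set \<Rightarrow> 'e set" where
  "lv F ends C = {e\<in>F. card (ends e \<inter> C) = 1}"

lemma card_filter_sum:
  assumes "finite F" shows "card {e\<in>F. P e} = (\<Sum>e\<in>F. if P e then 1 else 0)"
proof -
  have "sum (\<lambda>_. 1::nat) {e\<in>F. P e} = (\<Sum>e\<in>F. if P e then 1 else 0)"
    by (rule sum.inter_filter[OF assms])
  moreover have "card {e\<in>F. P e} = sum (\<lambda>_. 1::nat) {e\<in>F. P e}" by (rule card_eq_sum)
  ultimately show ?thesis by linarith
qed

lemma deg_sum:
  assumes "finite F" "finite C"
  shows "(\<Sum>x\<in>C. degree F ends x) = (\<Sum>e\<in>F. card (ends e \<inter> C))"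
proof -
  have "(\<Sum>x\<in>C. degree F ends x) = (\<Sum>x\<in>C. \<Sum>e\<in>F. if x \<in> ends e then 1 else 0)"
    unfolding degree_def card_filter_sum[OF assms(1)] by (rule refl)
  also have "\<dots> = (\<Sum>e\<in>F. \<Sum>x\<in>C. if x \<in> ends e then 1 else 0)" by (rule sum.swap)
  also have "\<dots> = (\<Sum>e\<in>F. card (ends e \<inter> C))"
  proof (rule sum.cong[OF refl])
    fix e
    have "card (ends e \<inter> C) = card {x\<in>C. x \<in> ends e}" by (rule arg_cong[where f=card]) blast
    also have "\<dots> = (\<Sum>x\<in>C. if x \<in> ends e then 1 else 0)" using card_filter_sum[OF assms(2)] .
    finally show "(\<Sum>x\<in>C. if x \<in> ends e then 1 else 0) = card (ends e \<inter> C)" by (rule sym)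
  qed
  finally show ?thesis .
qed

lemma lv_parity:
  assumes "finite F" "finite C" "\<forall>e\<in>F. card (ends e) = 2"
  shows "even (\<Sum>x\<in>C. degree F ends x) \<longleftrightarrow> even (card (lv F ends C))"
proof -
  have "{e\<in>F. odd (card (ends e \<inter> C))} = lv F ends C"
  proof -
    { fix e assume e: "e \<in> F"
      have fe: "finite (ends e)" using assms(3) e card.infinite by fastforce
      have "card (ends e \<inter> C) \<le> 2" using card_mono[OF fe, of "ends e \<inter> C"] assms(3) e by simp
      then have "odd (card (ends e \<inter> C)) \<longleftrightarrow> card (ends e \<inter> C) = 1"
        by (cases "card (ends e \<inter> C)") (auto simp: less_Suc_eq_le le_Suc_eq) }
    then show ?thesis unfolding lv_def by auto
  qed
  then show ?thesis using deg_sum[OF assms(1,2), of ends] sum_parity[OF assms(1), of "\<lambda>e. card (ends e \<inter> C)"]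
    by simp
qed

lemma two_ends:
  assumes "card (ends e) = 2"
  obtains a b where "a \<noteq> b" "ends e = {a, b}"
  using assms by (meson card_2_iff)

lemma path_leaves:
  assumes "R\<^sup>*\<^sup>* z b" "z \<in> C" "b \<notin> C"
  shows "\<exists>u w. R u w \<and> u \<in> C \<and> w \<notin> C"
  using assms
proof (induction rule: rtranclp_induct)
  case base then show ?case by simp
next
  case (step y w)
  show ?case
  proof (cases "y \<in> C")
    case True then show ?thesis using step by blast
  next
    case False then show ?thesis using step by blast
  qed
qed

lemma lv_in:
  assumes mg: "multigraph V E ends" and C: "C \<in> comps (gadj E ends) (V - S)"
    and e: "e \<in> lv E ends C"
  shows "\<exists>a b. ends e = {a, b} \<and> a \<in> C \<and> b \<in> S \<and> b \<notin> C"
proof -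
  have eE: "e \<in> E" and c1: "card (ends e \<inter> C) = 1" using e unfolding lv_def by auto
  have eV: "ends e \<subseteq> V" and c2: "card (ends e) = 2" using mg eE unfolding multigraph_def by auto
  obtain a b where ab: "a \<noteq> b" "ends e = {a, b}" using two_ends[of ends e, OF c2] by blast
  have Cc: "C \<subseteq> V - S" "clos (gadj E ends) (V - S) C"
    using C unfolding comps_char[OF gadj_sym] by simp_all
  have g: "gadj E ends a b" "gadj E ends b a" using ab eE unfolding gadj_def by (auto simp: insert_commute)
  have cases: "(a \<in> C \<and> b \<notin> C) \<or> (b \<in> C \<and> a \<notin> C)"
  proof -
    have "{a, b} \<inter> C \<noteq> {}" using c1 ab by (metis card.empty zero_neq_one)
    moreover have "\<not> (a \<in> C \<and> b \<in> C)"
    proof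
      assume "a \<in> C \<and> b \<in> C"
      then have "ends e \<inter> C = {a, b}" using ab by auto
      then show False using c1 ab by simp
    qed
    ultimately show ?thesis by blast
  qed
  then show ?thesis
  proof
    assume h: "a \<in> C \<and> b \<notin> C"
    have "b \<in> V" using eV ab by auto
    moreover have "b \<notin> V - S"
    proof
      assume "b \<in> V - S"
      then have "b \<in> C" using Cc(2) h g(1) unfolding clos_def by blast
      then show False using h by simp
    qed
    ultimately have "b \<in> S" by blast
    then show ?thesis using ab h by (intro exI[of _ a] exI[of _ b]) simp
  next
    assume h: "b \<in> C \<and> a \<notin> C"
    have "a \<in> V" using eV ab by auto
    moreover have "a \<notin> V - S"
    proof
      assume "a \<in> V - S"
      then have "a \<in> C" using Cc(2) h g(2) unfolding clos_def by blast
      then show False using h by simp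
    qed
    ultimately have "a \<in> S" by blast
    then show ?thesis using ab h by (intro exI[of _ b] exI[of _ a]) (simp add: insert_commute)
  qed
qed

lemma lv_sub: "lv E ends C \<subseteq> E" unfolding lv_def by auto

lemma lv_mono: "F \<subseteq> E \<Longrightarrow> lv F ends C \<subseteq> lv E ends C" unfolding lv_def by auto

lemma lv_disj:
  assumes mg: "multigraph V E ends" and C1: "C1 \<in> comps (gadj E ends) (V - S)"
    and C2: "C2 \<in> comps (gadj E ends) (V - S)" and ne: "C1 \<noteq> C2"
  shows "lv E ends C1 \<inter> lv E ends C2 = {}"
proof (rule ccontr)
  assume "\<not> ?thesis"
  then obtain e where e1: "e \<in> lv E ends C1" and e2: "e \<in> lv E ends C2" by blast
  obtain a b where ab: "ends e = {a, b}" "a \<in> C1" "b \<in> S" using lv_in[OF mg C1 e1] by blast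
  obtain a' b' where ab': "ends e = {a', b'}" "a' \<in> C2" "b' \<in> S" using lv_in[OF mg C2 e2] by blast
  have "C2 \<subseteq> V - S" using comps_sub[OF C2] .
  then have "a' \<notin> S" using ab' by blast
  then have "a' = a" using ab ab' by auto
  then show False using comps_disj[OF gadj_sym C1 C2 ne] ab ab' by blast
qed

lemma lv_singleton: "lv F ends {x} = {e\<in>F. x \<in> ends e}"
proof -
  have "ends e \<inter> {x} = (if x \<in> ends e then {x} else {})" for e by auto
  show ?thesis unfolding lv_def
  proof (rule Collect_cong)
    fix e show "(e \<in> F \<and> card (ends e \<inter> {x}) = 1) \<longleftrightarrow> (e \<in> F \<and> x \<in> ends e)"
      by (cases "x \<in> ends e") auto
  qed
qed

lemma odd_ne1: "odd (n::nat) \<Longrightarrow> n \<noteq> 1 \<Longrightarrow> n \<ge> 3" by presburger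

lemma mg_facts:
  assumes "multigraph V E ends"
  shows "finite V" "finite E" "\<And>e. e \<in> E \<Longrightarrow> ends e \<subseteq> V" "\<And>e. e \<in> E \<Longrightarrow> card (ends e) = 2"
  using assms unfolding multigraph_def by auto

lemma handshake:
  assumes mg: "multigraph V E ends" and d3: "\<forall>x\<in>V. degree E ends x = 3"
  shows "even (card V)"
proof -
  note mf = mg_facts[OF mg]
  have "(\<Sum>x\<in>V. degree E ends x) = (\<Sum>e\<in>E. card (ends e \<inter> V))" by (rule deg_sum[OF mf(2,1)])
  also have "\<dots> = (\<Sum>e\<in>E. 2)"
  proof (rule sum.cong[OF refl])
    fix e assume "e \<in> E"
    then have "ends e \<inter> V = ends e" using mf(3) by blast
    then show "card (ends e \<inter> V) = 2" using mf(4) \<open>e \<in> E\<close> by simp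
  qed
  finally have "(\<Sum>x\<in>V. degree E ends x) = 2 * card E" by simp
  moreover have "(\<Sum>x\<in>V. degree E ends x) = 3 * card V" using d3 by simp
  ultimately show ?thesis by presburger
qed

lemma lv3:
  assumes tc: "two_connected V E ends" and mg: "multigraph V E ends" and d3: "\<forall>x\<in>V. degree E ends x = 3"
    and SV: "S \<subseteq> V" and C: "C \<in> comps (gadj E ends) (V - S)" and oC: "odd (card C)"
  shows "card (lv E ends C) \<ge> 3"
proof -
  note mf = mg_facts[OF mg]
  have CV: "C \<subseteq> V" using comps_sub[OF C] by blast
  have fC: "finite C" using finite_subset[OF CV mf(1)] .
  have "(\<Sum>x\<in>C. degree E ends x) = (\<Sum>x\<in>C. 3)" using d3 CV by (intro sum.cong) auto
  then have "(\<Sum>x\<in>C. degree E ends x) = 3 * card C" by simp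
  moreover have "\<forall>e\<in>E. card (ends e) = 2" using mf(4) by blast
  ultimately have olv: "odd (card (lv E ends C))" using lv_parity[OF mf(2) fC, of ends] oC by simp
  have flv: "finite (lv E ends C)" using finite_subset[OF lv_sub mf(2)] .
  show ?thesis
  proof (cases "card C = 1")
    case True
    then obtain x where Cx: "C = {x}" by (meson card_1_singletonE)
    have "x \<in> V" using CV Cx by blast
    then have "card (lv E ends C) = 3" unfolding Cx lv_singleton using d3 unfolding degree_def by blast
    then show ?thesis by simp
  next
    case False
    have "C \<noteq> {}" using C unfolding comps_char[OF gadj_sym] by simp
    then have "card C > 0" using fC by (simp add: card_gt_0_iff)
    then have cC: "card C \<ge> 2" using False by linarith
    have "card (lv E ends C) \<noteq> 1"
    proof
      assume c1: "card (lv E ends C) = 1"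
      then obtain e0 where e0: "lv E ends C = {e0}" by (meson card_1_singletonE)
      obtain a b where ab: "ends e0 = {a, b}" "a \<in> C" "b \<in> S" "b \<notin> C"
        using lv_in[OF mg C, of e0] e0 by blast
      have "card (C - {a}) \<ge> 1" using cC ab(2) fC by simp
      then have "C - {a} \<noteq> {}" by (metis card.empty not_one_le_zero)
      then obtain z where z: "z \<in> C" "z \<noteq> a" by blast
      have "connected_in (V - {a}) E ends" using tc ab(2) CV unfolding two_connected_def by blast
      then have conn: "\<forall>x\<in>V - {a}. \<forall>y\<in>V - {a}. (rel_in (gadj E ends) (V - {a}))\<^sup>*\<^sup>* x y"
        unfolding connected_eq by simp
      have aS: "a \<notin> S" using ab(2) comps_sub[OF C] by blast
      have "z \<in> V - {a}" "b \<in> V - {a}" using z CV ab(3) SV aS by auto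
      then have "(rel_in (gadj E ends) (V - {a}))\<^sup>*\<^sup>* z b" using conn by blast
      then obtain u w where uw: "rel_in (gadj E ends) (V - {a}) u w" "u \<in> C" "w \<notin> C"
        using path_leaves[of _ z b C] z ab(4) by blast
      then obtain e' where e': "e' \<in> E" "ends e' = {u, w}" "u \<noteq> a" "w \<noteq> a"
        unfolding rel_in_def gadj_def by blast
      have "ends e' \<inter> C = {u}" using e'(2) uw(2,3) by blast
      then have "e' \<in> lv E ends C" unfolding lv_def using e'(1) by simp
      then have "e' = e0" using e0 by blast
      then have "a \<in> ends e'" using ab(1) by simp
      then show False using e'(2,3,4) by simp
    qed
    then show ?thesis using odd_ne1[OF olv] by simp
  qed
qed

lemma oddle:
  assumes tc: "two_connected V E ends" and mg: "multigraph V E ends" and d3: "\<forall>x\<in>V. degree E ends x = 3"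
    and SV: "S \<subseteq> V"
  shows "oddc (gadj E ends) (V - S) \<le> card S"
proof -
  note mf = mg_facts[OF mg]
  define Od where "Od = {C \<in> comps (gadj E ends) (V - S). odd (card C)}"
  have fOd: "finite Od" unfolding Od_def using finite_comps[of "V - S" "gadj E ends"] mf(1) by simp
  have flv: "\<forall>C\<in>Od. finite (lv E ends C)" using finite_subset[OF lv_sub mf(2)] by blast
  have "(\<Sum>C\<in>Od. 3) \<le> (\<Sum>C\<in>Od. card (lv E ends C))"
    by (rule sum_mono) (use lv3[OF tc mg d3 SV] in \<open>auto simp: Od_def\<close>)
  then have "3 * card Od \<le> (\<Sum>C\<in>Od. card (lv E ends C))" by simp
  also have "\<dots> = card (\<Union>C\<in>Od. lv E ends C)"
    by (rule card_UN_disjoint[symmetric, OF fOd flv]) (use lv_disj[OF mg] in \<open>auto simp: Od_def\<close>)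
  also have "\<dots> \<le> card (\<Union>s\<in>S. {e\<in>E. s \<in> ends e})"
  proof (rule card_mono)
    show "finite (\<Union>s\<in>S. {e\<in>E. s \<in> ends e})" by (rule finite_subset[OF _ mf(2)]) auto
    show "(\<Union>C\<in>Od. lv E ends C) \<subseteq> (\<Union>s\<in>S. {e\<in>E. s \<in> ends e})"
    proof
      fix e assume "e \<in> (\<Union>C\<in>Od. lv E ends C)"
      then obtain C where C: "C \<in> Od" "e \<in> lv E ends C" by blast
      then obtain a b where "ends e = {a, b}" "b \<in> S" using lv_in[OF mg, of C S e] unfolding Od_def by blast
      moreover have "e \<in> E" using C(2) lv_sub[of E ends C] by blast
      ultimately show "e \<in> (\<Union>s\<in>S. {e\<in>E. s \<in> ends e})" by auto
    qed
  qed
  also have "\<dots> \<le> (\<Sum>s\<in>S. card {e\<in>E. s \<in> ends e})"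
    by (rule card_UN_le) (rule finite_subset[OF SV mf(1)])
  also have "\<dots> = (\<Sum>s\<in>S. 3)"
    using d3 SV unfolding degree_def by (intro sum.cong) auto
  also have "\<dots> = 3 * card S" by simp
  finally show ?thesis unfolding oddc_def Od_def by simp
qed

lemma pm_edges:
  assumes "pm (gadj E ends) W m"
  shows "\<exists>M\<subseteq>E. (\<forall>x\<in>W. degree M ends x = 1) \<and> (\<forall>e\<in>M. ends e \<subseteq> W)"
proof -
  define ch where "ch = (\<lambda>x. SOME e. e \<in> E \<and> ends e = {x, m x})"
  have pmx: "m x \<in> W" "m x \<noteq> x" "gadj E ends x (m x)" "m (m x) = x" if "x \<in> W" for x
    using assms that unfolding pm_def by auto
  have ch: "ch x \<in> E \<and> ends (ch x) = {x, m x}" if "x \<in> W" for x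
  proof -
    have "\<exists>e. e \<in> E \<and> ends e = {x, m x}" using pmx(3)[OF that] unfolding gadj_def by blast
    then show ?thesis unfolding ch_def by (rule someI_ex)
  qed
  have chm: "ch (m x) = ch x" if "x \<in> W" for x
  proof -
    have "{m x, m (m x)} = {x, m x}" using pmx(4)[OF that] by auto
    then show ?thesis unfolding ch_def by simp
  qed
  define M where "M = ch ` W"
  have "M \<subseteq> E" unfolding M_def using ch by blast
  moreover have "\<forall>e\<in>M. ends e \<subseteq> W" unfolding M_def using ch pmx by auto
  moreover have "\<forall>x\<in>W. degree M ends x = 1"
  proof
    fix x assume x: "x \<in> W"
    have "{e\<in>M. x \<in> ends e} = {ch x}"
    proof
      show "{ch x} \<subseteq> {e\<in>M. x \<in> ends e}" using x ch[OF x] unfolding M_def by auto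
      show "{e\<in>M. x \<in> ends e} \<subseteq> {ch x}"
      proof
        fix e assume "e \<in> {e\<in>M. x \<in> ends e}"
        then obtain y where y: "y \<in> W" "e = ch y" "x \<in> ends (ch y)" unfolding M_def by blast
        then have "x = y \<or> x = m y" using ch[OF y(1)] by auto
        then show "e \<in> {ch x}"
        proof
          assume "x = y" then show ?thesis using y by simp
        next
          assume "x = m y" then show ?thesis using y chm[OF y(1)] by simp
        qed
      qed
    qed
    then show "degree M ends x = 1" unfolding degree_def by simp
  qed
  ultimately show ?thesis by blast
qed

lemma oddc_empty: "oddc A {} = 0"
  unfolding oddc_def comps_def by simp

lemma single_comp:
  assumes "v \<in> U" "\<forall>y\<in>U. gadj E ends v y \<longrightarrow> y = v"
  shows "{v} \<in> comps (gadj E ends) U"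
proof -
  have "clos (gadj E ends) U {v}" unfolding clos_def using assms(2) by blast
  moreover have "conn (gadj E ends) {v}" unfolding conn_def by simp
  ultimately show ?thesis using assms(1) comps_char[OF gadj_sym, where C="{v}" and U=U] by blast
qed

lemma bwd:
  assumes mg: "multigraph V E ends" and BV: "B \<subseteq> V"
    and ob: "oddc (gadj E ends) (V - B) = card B" and vB: "v \<in> V - B"
    and iso: "\<forall>e\<in>E. v \<in> ends e \<longrightarrow> ends e - {v} \<subseteq> B"
    and vm: "v_matching V E ends v F"
  shows False
proof -
  note mf = mg_facts[OF mg]
  have FE: "F \<subseteq> E" and dv: "degree F ends v = 3" and d1: "\<forall>x\<in>V - {v}. degree F ends x = 1"
    using vm unfolding v_matching_def by auto
  have fF: "finite F" using finite_subset[OF FE mf(2)] .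
  have c2F: "\<forall>e\<in>F. card (ends e) = 2" using FE mf(4) by blast
  define U where "U = V - B"
  define G where "G = gadj E ends"
  have vU: "v \<in> U" using vB unfolding U_def .
  have Dv: "{v} \<in> comps G U" unfolding G_def
  proof (rule single_comp[OF vU], intro ballI impI)
    fix y assume y: "y \<in> U" "gadj E ends v y"
    then obtain e where e: "e \<in> E" "ends e = {v, y}" unfolding gadj_def by blast
    then have "ends e - {v} \<subseteq> B" using iso by blast
    then show "y = v" using e y unfolding U_def by blast
  qed
  define Od where "Od = {C \<in> comps G U. odd (card C)}"
  have fOd: "finite Od" unfolding Od_def using finite_comps[of U G] mf(1) unfolding U_def by simp
  have cOd: "card Od = card B" using ob unfolding Od_def oddc_def U_def G_def .
  have vOd: "{v} \<in> Od" unfolding Od_def using Dv by simp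
  define O' where "O' = Od - {{v}}"
  have cO': "card O' = card B - 1" unfolding O'_def using cOd vOd fOd by simp
  have B1: "card B \<ge> 1" using cOd vOd fOd by (metis card_0_eq empty_iff less_one not_le)
  define Ev where "Ev = {e\<in>F. v \<in> ends e}"
  have cEv: "card Ev = 3" using dv unfolding Ev_def degree_def .
  have O'c: "C \<in> comps G U" "v \<notin> C" if "C \<in> O'" for C
  proof -
    show C: "C \<in> comps G U" using that unfolding O'_def Od_def by simp
    have "C \<noteq> {v}" using that unfolding O'_def by simp
    then have "C \<inter> {v} = {}" using comps_disj[OF gadj_sym C[unfolded G_def] Dv[unfolded G_def]] by blast
    then show "v \<notin> C" by blast
  qed
  have lvne: "card (lv F ends C) \<ge> 1" if C: "C \<in> O'" for C
  proof -
    have CV: "C \<subseteq> V" using comps_sub[OF O'c(1)[OF C]] unfolding U_def by blast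
    have fC: "finite C" using finite_subset[OF CV mf(1)] .
    have "(\<Sum>x\<in>C. degree F ends x) = (\<Sum>x\<in>C. 1)" using d1 CV O'c(2)[OF C] by (intro sum.cong) auto
    then have "(\<Sum>x\<in>C. degree F ends x) = card C" by simp
    moreover have "odd (card C)" using C unfolding O'_def Od_def by simp
    ultimately have "odd (card (lv F ends C))" using lv_parity[OF fF fC c2F] by simp
    then show ?thesis by (simp add: odd_pos Suc_le_eq)
  qed
  have lvin: "\<exists>a b. ends e = {a, b} \<and> a \<in> C \<and> b \<in> B \<and> b \<notin> C" if "C \<in> O'" "e \<in> lv F ends C" for C e
  proof -
    have "e \<in> lv E ends C" using lv_mono[OF FE] that(2) by blast
    then show ?thesis using lv_in[OF mg, of C B e] O'c(1)[OF that(1)] unfolding G_def U_def by blast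
  qed
  define Z where "Z = (\<Union>b\<in>B. {e\<in>F. b \<in> ends e})"
  have fB: "finite B" using finite_subset[OF BV mf(1)] .
  have "card Z \<le> (\<Sum>b\<in>B. card {e\<in>F. b \<in> ends e})" unfolding Z_def by (rule card_UN_le[OF fB])
  also have "\<dots> = (\<Sum>b\<in>B. 1)"
    using d1 BV vB unfolding degree_def by (intro sum.cong) auto
  finally have cZ: "card Z \<le> card B" by simp
  have fZ: "finite Z" unfolding Z_def by (rule finite_subset[OF _ fF]) auto
  define Y where "Y = Ev \<union> (\<Union>C\<in>O'. lv F ends C)"
  have YZ: "Y \<subseteq> Z"
  proof
    fix e assume "e \<in> Y"
    then consider (a) "e \<in> Ev" | (b) C where "C \<in> O'" "e \<in> lv F ends C" unfolding Y_def by blast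
    then show "e \<in> Z"
    proof cases
      case a
      then have eF: "e \<in> F" and ve: "v \<in> ends e" unfolding Ev_def by auto
      have eE: "e \<in> E" using eF FE by blast
      obtain a b where ab: "a \<noteq> b" "ends e = {a, b}" using two_ends[of ends e] mf(4)[OF eE] by blast
      have "\<exists>y. y \<in> ends e \<and> y \<noteq> v" using ab by blast
      then obtain y where y: "y \<in> ends e" "y \<noteq> v" by blast
      have "y \<in> B" using iso eE ve y by blast
      then show ?thesis unfolding Z_def using eF y by blast
    next
      case b
      then obtain a b' where "ends e = {a, b'}" "b' \<in> B" using lvin by blast
      moreover have "e \<in> F" using b(2) unfolding lv_def by simp
      ultimately show ?thesis unfolding Z_def by blast
    qed
  qed
  have fEv: "finite Ev" unfolding Ev_def using fF by simp
  have flvF: "\<forall>C\<in>O'. finite (lv F ends C)" unfolding lv_def using fF by simp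
  have fO': "finite O'" unfolding O'_def using fOd by simp
  have dj1: "Ev \<inter> (\<Union>C\<in>O'. lv F ends C) = {}"
  proof (rule ccontr)
    assume "\<not> ?thesis"
    then obtain e C where C: "C \<in> O'" "e \<in> lv F ends C" and ve: "v \<in> ends e" unfolding Ev_def by blast
    obtain a b where ab: "ends e = {a, b}" "a \<in> C" "b \<in> B" using lvin[OF C] by blast
    have "v = a \<or> v = b" using ab(1) ve by blast
    then show False using ab O'c(2)[OF C(1)] vB by blast
  qed
  have dj2: "\<forall>C1\<in>O'. \<forall>C2\<in>O'. C1 \<noteq> C2 \<longrightarrow> lv F ends C1 \<inter> lv F ends C2 = {}"
  proof (intro ballI impI)
    fix C1 C2 assume C: "C1 \<in> O'" "C2 \<in> O'" "C1 \<noteq> C2"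
    have "lv E ends C1 \<inter> lv E ends C2 = {}"
      using lv_disj[OF mg, of C1 B C2] O'c(1)[OF C(1)] O'c(1)[OF C(2)] C(3) unfolding G_def U_def by blast
    then show "lv F ends C1 \<inter> lv F ends C2 = {}" using lv_mono[OF FE, of ends C1] lv_mono[OF FE, of ends C2] by blast
  qed
  have "card Y = card Ev + card (\<Union>C\<in>O'. lv F ends C)"
    unfolding Y_def by (rule card_Un_disjoint[OF fEv _ dj1]) (use fO' flvF in simp)
  also have "card (\<Union>C\<in>O'. lv F ends C) = (\<Sum>C\<in>O'. card (lv F ends C))"
    by (rule card_UN_disjoint[OF fO' flvF dj2])
  finally have cY: "card Y = card Ev + (\<Sum>C\<in>O'. card (lv F ends C))" .
  have "(\<Sum>C\<in>O'. (1::nat)) \<le> (\<Sum>C\<in>O'. card (lv F ends C))"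
    by (rule sum_mono) (use lvne in simp)
  then have "card Y \<ge> 3 + card O'" using cEv cY by simp
  moreover have "card Y \<le> card Z" using card_mono[OF fZ YZ] .
  ultimately show False using cZ cO' B1 by linarith
qed


lemma edge_at_v:
  assumes mg: "multigraph V E ends" and e: "e \<in> E" "v \<in> ends e"
  obtains y where "y \<noteq> v" "y \<in> V" "ends e = {v, y}"
proof -
  note mf = mg_facts[OF mg]
  obtain a b where ab: "a \<noteq> b" "ends e = {a, b}" using two_ends[of ends e] mf(4)[OF e(1)] by blast
  have eV: "ends e \<subseteq> V" using mf(3)[OF e(1)] .
  show ?thesis
  proof (cases "v = a")
    case True
    then show ?thesis using that[of b] ab eV by auto
  next
    case False
    then have "v = b" using ab e(2) by blast
    then show ?thesis using that[of a] ab eV by (auto simp: insert_commute)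
  qed
qed

lemma fwd:
  assumes tc: "two_connected V E ends" and cb: "cubic V E ends" and vV: "v \<in> V"
    and nm: "\<not> lambda_matchable V E ends v"
  shows "\<exists>B. barrier V E ends B \<and> isolated_in_minus V E ends B v"
proof -
  have mg: "multigraph V E ends" and d3: "\<forall>x\<in>V. degree E ends x = 3"
    using cb unfolding cubic_def by auto
  note mf = mg_facts[OF mg]
  define G where "G = gadj E ends"
  have s: "symp G" unfolding G_def by (rule gadj_sym)
  have ol: "oddc G (V - S) \<le> card S" if "S \<subseteq> V" for S
    unfolding G_def using oddle[OF tc mg d3 that] .
  have evV: "even (card V)" using handshake[OF mg d3] .
  have "tcond G V" unfolding tcond_def using ol by blast
  then obtain m where "pm G V m" using tutte[OF s mf(1)] by blast
  then obtain M0 where M0: "M0 \<subseteq> E" "\<forall>x\<in>V. degree M0 ends x = 1"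
    using pm_edges[of E ends V m] unfolding G_def by blast
  have pmG: "\<exists>M. perfect_matching V E ends M" unfolding perfect_matching_def using M0 by blast
  define N where "N = {y\<in>V. y \<noteq> v \<and> G v y}"
  define Ev where "Ev = {e\<in>E. v \<in> ends e}"
  have cEv: "card Ev = 3" using d3 vV unfolding Ev_def degree_def by blast
  have fEv: "finite Ev" unfolding Ev_def using mf(2) by simp
  have endv: "\<exists>y. y \<noteq> v \<and> y \<in> N \<and> ends e = {v, y}" if "e \<in> Ev" for e
  proof -
    have e: "e \<in> E" "v \<in> ends e" using that unfolding Ev_def by auto
    obtain y where y: "y \<noteq> v" "y \<in> V" "ends e = {v, y}" using edge_at_v[OF mg e] by blast
    have "G v y" unfolding G_def gadj_def using e(1) y(3) by blast
    then show ?thesis using y unfolding N_def by blast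
  qed
  have NU: "N = (\<Union>e\<in>Ev. ends e - {v})"
  proof
    show "N \<subseteq> (\<Union>e\<in>Ev. ends e - {v})"
    proof
      fix y assume "y \<in> N"
      then have y: "y \<noteq> v" "G v y" unfolding N_def by auto
      then obtain e where "e \<in> E" "ends e = {v, y}" unfolding G_def gadj_def by blast
      then show "y \<in> (\<Union>e\<in>Ev. ends e - {v})" using y unfolding Ev_def by blast
    qed
    show "(\<Union>e\<in>Ev. ends e - {v}) \<subseteq> N"
    proof
      fix y assume "y \<in> (\<Union>e\<in>Ev. ends e - {v})"
      then obtain e where e: "e \<in> Ev" "y \<in> ends e" "y \<noteq> v" by blast
      obtain y' where "y' \<noteq> v" "y' \<in> N" "ends e = {v, y'}" using endv[OF e(1)] by blast
      then show "y \<in> N" using e by blast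
    qed
  qed
  have cN: "card N \<le> 3"
  proof -
    have "card N \<le> (\<Sum>e\<in>Ev. card (ends e - {v}))" unfolding NU by (rule card_UN_le[OF fEv])
    also have "\<dots> = (\<Sum>e\<in>Ev. 1)"
    proof (rule sum.cong[OF refl])
      fix e assume "e \<in> Ev"
      then obtain y where "y \<noteq> v" "ends e = {v, y}" using endv by blast
      then have "ends e - {v} = {y}" by blast
      then show "card (ends e - {v}) = 1" by simp
    qed
    finally show ?thesis using cEv by simp
  qed
  have NV: "N \<subseteq> V" unfolding N_def by blast
  have fN: "finite N" using finite_subset[OF NV mf(1)] .
  have vN: "v \<notin> N" unfolding N_def by blast
  define W where "W = V - insert v N"
  have fW: "finite W" unfolding W_def using mf(1) by simp
  have claim: "\<exists>T\<subseteq>W. card T + card N \<le> oddc G (W - T) + 2"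
  proof (cases "tcond G W")
    case True
    then obtain mW where "pm G W mW" using tutte[OF s fW] by blast
    then obtain M where M: "M \<subseteq> E" "\<forall>x\<in>W. degree M ends x = 1" "\<forall>e\<in>M. ends e \<subseteq> W"
      using pm_edges[of E ends W mW] unfolding G_def by blast
    have "card N \<noteq> 3"
    proof
      assume cN3: "card N = 3"
      define F where "F = M \<union> Ev"
      have FE: "F \<subseteq> E" unfolding F_def Ev_def using M(1) by blast
      have vW: "v \<notin> W" unfolding W_def by blast
      have "{e\<in>F. v \<in> ends e} = Ev" unfolding F_def Ev_def using M(1,3) vW by blast
      then have dFv: "degree F ends v = 3" unfolding degree_def using cEv by simp
      define Ex where "Ex = (\<lambda>y. {e\<in>Ev. y \<in> ends e})"
      have Exne: "Ex y \<noteq> {}" if "y \<in> N" for y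
      proof -
        have "G v y" using that unfolding N_def by blast
        then obtain e where "e \<in> E" "ends e = {v, y}" unfolding G_def gadj_def by blast
        then have "e \<in> Ex y" unfolding Ex_def Ev_def by blast
        then show ?thesis by blast
      qed
      have Exdj: "\<forall>y1\<in>N. \<forall>y2\<in>N. y1 \<noteq> y2 \<longrightarrow> Ex y1 \<inter> Ex y2 = {}"
      proof (intro ballI impI)
        fix y1 y2 assume y: "y1 \<in> N" "y2 \<in> N" "y1 \<noteq> y2"
        show "Ex y1 \<inter> Ex y2 = {}"
        proof (rule ccontr)
          assume "\<not> ?thesis"
          then obtain e where e: "e \<in> Ev" "y1 \<in> ends e" "y2 \<in> ends e" unfolding Ex_def by blast
          obtain z where z: "z \<noteq> v" "ends e = {v, z}" using endv[OF e(1)] by blast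
          have "y1 \<noteq> v" "y2 \<noteq> v" using y vN by blast+
          then show False using e z y(3) by blast
        qed
      qed
      have fEx: "\<forall>y\<in>N. finite (Ex y)" unfolding Ex_def using fEv by simp
      have "(\<Sum>y\<in>N. card (Ex y)) = card (\<Union>y\<in>N. Ex y)" by (rule card_UN_disjoint[symmetric, OF fN fEx Exdj])
      also have "\<dots> \<le> card Ev" by (rule card_mono[OF fEv]) (auto simp: Ex_def)
      finally have sEx: "(\<Sum>y\<in>N. card (Ex y)) \<le> 3" using cEv by simp
      have Ex1: "card (Ex x) = 1" if x: "x \<in> N" for x
      proof -
        have ge1: "card (Ex y) \<ge> 1" if "y \<in> N" for y
          using Exne[OF that] fEx that by (simp add: Suc_le_eq card_gt_0_iff)
        have "(\<Sum>y\<in>N. card (Ex y)) = card (Ex x) + (\<Sum>y\<in>N - {x}. card (Ex y))"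
          by (rule sum.remove[OF fN x])
        moreover have "(\<Sum>y\<in>N - {x}. (1::nat)) \<le> (\<Sum>y\<in>N - {x}. card (Ex y))"
          by (rule sum_mono) (use ge1 in simp)
        moreover have "card (N - {x}) = 2" using cN3 x fN by simp
        ultimately have "card (Ex x) \<le> 1" using sEx by simp
        then show ?thesis using ge1[OF x] by simp
      qed
      have "v_matching V E ends v F" unfolding v_matching_def
      proof (intro conjI ballI)
        show "F \<subseteq> E" by (rule FE)
        show "degree F ends v = 3" by (rule dFv)
        fix x assume x: "x \<in> V - {v}"
        show "degree F ends x = 1"
        proof (cases "x \<in> W")
          case True
          have "{e\<in>F. x \<in> ends e} = {e\<in>M. x \<in> ends e}"
          proof -
            have "e \<notin> Ev" if "x \<in> ends e" for e
            proof
              assume "e \<in> Ev"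
              then obtain y where y: "y \<noteq> v" "y \<in> N" "ends e = {v, y}" using endv by blast
              then have "x = y" using that x by blast
              then show False using y True unfolding W_def by blast
            qed
            then show ?thesis unfolding F_def by blast
          qed
          then show ?thesis using M(2) True unfolding degree_def by simp
        next
          case False
          then have xN: "x \<in> N" using x unfolding W_def by blast
          have "{e\<in>F. x \<in> ends e} = Ex x" unfolding F_def Ex_def using M(3) False by blast
          then show ?thesis using Ex1[OF xN] unfolding degree_def by simp
        qed
      qed
      then show False using nm unfolding lambda_matchable_def by blast
    qed
    then have "card N \<le> 2" using cN by linarith
    then show ?thesis by (intro exI[of _ "{}"]) simp
  next
    case False
    then obtain T where T: "T \<subseteq> W" "oddc G (W - T) > card T" unfolding tcond_def by (auto simp: not_le)
    then show ?thesis using cN by (intro exI[of _ T]) simp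
  qed
  then obtain T where T: "T \<subseteq> W" "card T + card N \<le> oddc G (W - T) + 2" by blast
  define B where "B = N \<union> T"
  have BV: "B \<subseteq> V" unfolding B_def using NV T(1) unfolding W_def by blast
  have vB: "v \<notin> B" unfolding B_def using vN T(1) unfolding W_def by blast
  have NT: "N \<inter> T = {}" using T(1) unfolding W_def by blast
  have fT: "finite T" using finite_subset[OF T(1) fW] .
  have cB: "card B = card N + card T" unfolding B_def using card_Un_disjoint[OF fN fT NT] .
  define U where "U = V - B"
  have vU: "v \<in> U" unfolding U_def using vV vB by blast
  have fU: "finite U" unfolding U_def using mf(1) by simp
  have Dv: "{v} \<in> comps G U" unfolding G_def
  proof (rule single_comp[OF vU], intro ballI impI)
    fix y assume y: "y \<in> U" "gadj E ends v y"
    show "y = v"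
    proof (rule ccontr)
      assume "y \<noteq> v"
      then have "y \<in> N" unfolding N_def G_def using y unfolding U_def by blast
      then show False using y unfolding U_def B_def by blast
    qed
  qed
  have "oddc G (U - {v}) + (if odd (card {v}) then 1 else 0) = oddc G U + oddc G ({v} - {v})"
    by (rule oddc_split[OF s fU Dv]) simp
  moreover have "U - {v} = W - T" unfolding U_def W_def B_def by blast
  ultimately have oU: "oddc G U = oddc G (W - T) + 1" using oddc_empty by simp
  have le: "oddc G U \<le> card B" unfolding U_def by (rule ol[OF BV])
  have fB: "finite B" using finite_subset[OF BV mf(1)] .
  have "card U = card V - card B" unfolding U_def using BV fB by (simp add: card_Diff_subset)
  moreover have "card B \<le> card V" using card_mono[OF mf(1) BV] .
  moreover have "even (oddc G U) \<longleftrightarrow> even (card U)" using oddc_parity[OF s fU] .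
  ultimately have par: "even (oddc G U) \<longleftrightarrow> even (card B)" using evV by auto
  have ge: "oddc G U + 1 \<ge> card B" using oU T(2) cB by linarith
  have eqB: "oddc G U = card B"
  proof (rule ccontr)
    assume "oddc G U \<noteq> card B"
    then have h: "oddc G U + 1 = card B" using le ge by linarith
    have "even (oddc G U) \<longleftrightarrow> even (oddc G U + 1)" using par unfolding h .
    then show False by simp
  qed
  have "barrier V E ends B"
    unfolding barrier_def odd_comp_eq using pmG BV eqB unfolding G_def U_def by blast
  moreover have "isolated_in_minus V E ends B v"
    unfolding isolated_in_minus_def
  proof (intro conjI ballI impI)
    show "v \<in> V - B" using vV vB by blast
    fix e assume e: "e \<in> E" "v \<in> ends e"
    then have "e \<in> Ev" unfolding Ev_def by blast
    then obtain y where "y \<noteq> v" "y \<in> N" "ends e = {v, y}" using endv by blast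
    then show "ends e - {v} \<subseteq> B" unfolding B_def by blast
  qed
  ultimately show ?thesis by blast
qed

theorem lemma1p4:
  fixes V :: "'v set" and E :: "'e set" and ends :: "'e \<Rightarrow> 'v set" and v :: 'v
  assumes "two_connected V E ends" and "cubic V E ends" and "v \<in> V"
  shows "\<not> lambda_matchable V E ends v \<longleftrightarrow>
         (\<exists>B. barrier V E ends B \<and> isolated_in_minus V E ends B v)"
proof
  assume "\<not> lambda_matchable V E ends v"
  then show "\<exists>B. barrier V E ends B \<and> isolated_in_minus V E ends B v" using fwd[OF assms] by blast
next
  assume "\<exists>B. barrier V E ends B \<and> isolated_in_minus V E ends B v"
  then obtain B where B: "barrier V E ends B" "isolated_in_minus V E ends B v" by blast
  have mg: "multigraph V E ends" using assms(2) unfolding cubic_def by blast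
  have BV: "B \<subseteq> V" and ob: "oddc (gadj E ends) (V - B) = card B"
    using B(1) unfolding barrier_def odd_comp_eq by auto
  have vB: "v \<in> V - B" and iso: "\<forall>e\<in>E. v \<in> ends e \<longrightarrow> ends e - {v} \<subseteq> B"
    using B(2) unfolding isolated_in_minus_def by auto
  show "\<not> lambda_matchable V E ends v"
  proof
    assume "lambda_matchable V E ends v"
    then obtain F where "v_matching V E ends v F" unfolding lambda_matchable_def by blast
    then show False using bwd[OF mg BV ob vB iso] by blast
  qed
qed

end
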